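(* There exist two MatP instances $I_A,I_B$ with the same underlying graph, differing only by a single swap in the preference order of one agent, such that a robust popular matching with respect to $I_A$ and $I_B$ exists but no robust dominant matching exists; in particular, a maximum-size robust popular matching need not be robust dominant. Concretely: $W=\{w_1,w_2,w_3\}$, $F=\{f_1,f_2,f_3\}$; in $I_A$: $w_1: f_1\succ f_3$, $w_2: f_1\succ f_2$, $w_3: f_3$; in $I_B$ the same except $w_1: f_3\succ f_1$; in both: $f_1: w_2\succ w_1$, $f_2: w_2$, $f_3: w_1\succ w_3$ (edges are exactly the pairs appearing in these lists). Then $\{\{w_1,f_3\},\{w_2,f_1\}\}$ is the unique robust popular matching and there is no robust dominant matching.
   Context: An instance $I$ of matchings under preferences (MatP) consists of a bipartite graph $G^I=(W\cup F,E^I)$ with disjoint finite vertex sets $W$ (workers) and $F$ (firms), whose elements are called agents, together with, for each agent $x$, a strict linear order $\succ_x^I$ over the set $N_x^I$ of neighbors of $x$ in $G^I$. A matching is a set of pairwise disjoint edges; $M(x)$ denotes the partner of a matched agent $x$. Agent $x$ prefers $M$ over $M'$ if $x$ is matched in $M$ and unmatched in $M'$, or matched in both with $M(x)\succ_x M'(x)$. Define $\mathrm{vote}^I_x(M,M')=1$ if $x$ prefers $M$ over $M'$, $-1$ if $x$ prefers $M'$ over $M$, and $0$ otherwise, and $\phi^I(M,M')=\sum_{x\in W\cup F}\mathrm{vote}^I_x(M,M')$. A matching $M$ of $G^I$ is popular for $I$ if $\phi^I(M,M')\ge 0$ for every matching $M'$ of $G^I$; it is dominant for $I$ if it is popular and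 $\phi^I(M,M')>0$ for every matching $M'$ of $G^I$ with $|M'|>|M|$. A matching is robust popular (resp. robust dominant) with respect to $I_A,I_B$ if it is popular (resp. dominant) for both. *)

theory Defs
  imports Main
begin

text \<open>A MatP instance: workers W, firms F, edge set E (edges as 2-element sets {w,f}),
  and for every agent x a strict preference relation: pref x a b means a is strictly
  preferred to b by x.\<close>

record 'a matp =
  Wk :: "'a set"
  Fm :: "'a set"
  Ed :: "'a set set"
  pref :: "'a \<Rightarrow> 'a \<Rightarrow> 'a \<Rightarrow> bool"

definition neighbors :: "'a matp \<Rightarrow> 'a \<Rightarrow> 'a set" where
  "neighbors I x = {y. {x, y} \<in> Ed I}"

definition strict_linear_on :: "'a set \<Rightarrow> ('a \<Rightarrow> 'a \<Rightarrow> bool) \<Rightarrow> bool" where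
  "strict_linear_on S R \<longleftrightarrow>
     (\<forall>a b. R a b \<longrightarrow> a \<in> S \<and> b \<in> S) \<and>
     (\<forall>a\<in>S. \<not> R a a) \<and>
     (\<forall>a\<in>S. \<forall>b\<in>S. \<forall>c\<in>S. R a b \<longrightarrow> R b c \<longrightarrow> R a c) \<and>
     (\<forall>a\<in>S. \<forall>b\<in>S. a \<noteq> b \<longrightarrow> R a b \<or> R b a)"

definition matp_instance :: "'a matp \<Rightarrow> bool" where
  "matp_instance I \<longleftrightarrow>
     finite (Wk I) \<and> finite (Fm I) \<and> Wk I \<inter> Fm I = {} \<and>
     Ed I \<subseteq> {{w, f} | w f. w \<in> Wk I \<and> f \<in> Fm I} \<and>
     (\<forall>x \<in> Wk I \<union> Fm I. strict_linear_on (neighbors I x) (pref I x))"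

definition is_matching :: "'a matp \<Rightarrow> 'a set set \<Rightarrow> bool" where
  "is_matching I M \<longleftrightarrow> M \<subseteq> Ed I \<and> (\<forall>e\<in>M. \<forall>e'\<in>M. e \<noteq> e' \<longrightarrow> e \<inter> e' = {})"

definition matched :: "'a set set \<Rightarrow> 'a \<Rightarrow> bool" where
  "matched M x \<longleftrightarrow> (\<exists>y. {x, y} \<in> M)"

definition partner :: "'a set set \<Rightarrow> 'a \<Rightarrow> 'a" where
  "partner M x = (THE y. {x, y} \<in> M)"

definition prefers :: "'a matp \<Rightarrow> 'a \<Rightarrow> 'a set set \<Rightarrow> 'a set set \<Rightarrow> bool" where
  "prefers I x M M' \<longleftrightarrow>
     (matched M x \<and> \<not> matched M' x) \<or>
     (matched M x \<and> matched M' x \<and> pref I x (partner M x) (partner M' x))"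

definition vote :: "'a matp \<Rightarrow> 'a \<Rightarrow> 'a set set \<Rightarrow> 'a set set \<Rightarrow> int" where
  "vote I x M M' = (if prefers I x M M' then 1 else if prefers I x M' M then -1 else 0)"

definition phi :: "'a matp \<Rightarrow> 'a set set \<Rightarrow> 'a set set \<Rightarrow> int" where
  "phi I M M' = (\<Sum>x \<in> Wk I \<union> Fm I. vote I x M M')"

definition popular :: "'a matp \<Rightarrow> 'a set set \<Rightarrow> bool" where
  "popular I M \<longleftrightarrow> is_matching I M \<and> (\<forall>M'. is_matching I M' \<longrightarrow> phi I M M' \<ge> 0)"

definition dominant :: "'a matp \<Rightarrow> 'a set set \<Rightarrow> bool" where
  "dominant I M \<longleftrightarrow> popular I M \<and>
     (\<forall>M'. is_matching I M' \<longrightarrow> card M' > card M \<longrightarrow> phi I M M' > 0)"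

definition robust_popular :: "'a matp \<Rightarrow> 'a matp \<Rightarrow> 'a set set \<Rightarrow> bool" where
  "robust_popular IA IB M \<longleftrightarrow> popular IA M \<and> popular IB M"

definition robust_dominant :: "'a matp \<Rightarrow> 'a matp \<Rightarrow> 'a set set \<Rightarrow> bool" where
  "robust_dominant IA IB M \<longleftrightarrow> dominant IA M \<and> dominant IB M"

definition list_pref :: "'a list \<Rightarrow> 'a \<Rightarrow> 'a \<Rightarrow> bool" where
  "list_pref L a b \<longleftrightarrow> (\<exists>xs ys. L = xs @ a # ys \<and> b \<in> set ys)"

datatype agent = w1 | w2 | w3 | f1 | f2 | f3

fun prefA_list :: "agent \<Rightarrow> agent list" where
  "prefA_list w1 = [f1, f3]"
| "prefA_list w2 = [f1, f2]"
| "prefA_list w3 = [f3]"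
| "prefA_list f1 = [w2, w1]"
| "prefA_list f2 = [w2]"
| "prefA_list f3 = [w1, w3]"

fun prefB_list :: "agent \<Rightarrow> agent list" where
  "prefB_list w1 = [f3, f1]"
| "prefB_list x = prefA_list x"

definition ex_edges :: "agent set set" where
  "ex_edges = {{w, f} | w f. w \<in> {w1, w2, w3} \<and> f \<in> set (prefA_list w)}"

definition IA :: "agent matp" where
  "IA = \<lparr>Wk = {w1, w2, w3}, Fm = {f1, f2, f3}, Ed = ex_edges,
         pref = (\<lambda>x. list_pref (prefA_list x))\<rparr>"

definition IB :: "agent matp" where
  "IB = \<lparr>Wk = {w1, w2, w3}, Fm = {f1, f2, f3}, Ed = ex_edges,
         pref = (\<lambda>x. list_pref (prefB_list x))\<rparr>"

end

theory Submission imports Defs begin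

lemma lp2[simp]: "list_pref [x,y] a b \<longleftrightarrow> a = x \<and> b = y"
  unfolding list_pref_def
  apply (rule iffI)
   apply (auto simp: Cons_eq_append_conv append_eq_Cons_conv)
  apply (rule exI[of _ "[]"]) by auto
lemma lp1[simp]: "list_pref [x] a b \<longleftrightarrow> False"
  unfolding list_pref_def by (auto simp: Cons_eq_append_conv append_eq_Cons_conv)

lemma edge_in: "w \<in> {w1,w2,w3} \<Longrightarrow> f \<in> set (prefA_list w) \<Longrightarrow> {w,f} \<in> ex_edges"
  unfolding ex_edges_def by blast

lemma edges: "ex_edges = {{w1,f1},{w1,f3},{w2,f1},{w2,f2},{w3,f3}}"
proof
  show "ex_edges \<subseteq> {{w1,f1},{w1,f3},{w2,f1},{w2,f2},{w3,f3}}"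
    unfolding ex_edges_def by auto
  show "{{w1,f1},{w1,f3},{w2,f1},{w2,f2},{w3,f3}} \<subseteq> ex_edges"
    using edge_in[of w1 f1] edge_in[of w1 f3] edge_in[of w2 f1] edge_in[of w2 f2] edge_in[of w3 f3]
    by simp
qed

definition MS :: "agent set set set" where
 "MS = {{}, {{w1,f1}}, {{w1,f3}}, {{w2,f1}}, {{w2,f2}}, {{w3,f3}},
   {{w1,f1},{w2,f2}}, {{w1,f1},{w3,f3}}, {{w1,f3},{w2,f1}}, {{w1,f3},{w2,f2}},
   {{w2,f1},{w3,f3}}, {{w2,f2},{w3,f3}}, {{w1,f1},{w2,f2},{w3,f3}}}"

lemma conf: assumes "is_matching I M" "a \<in> M" "b \<in> M" "a \<inter> b \<noteq> {}" "a \<noteq> b" shows False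
  using assms unfolding is_matching_def by blast

lemma match_dir: assumes E: "Ed I = ex_edges" and m: "is_matching I M" shows "M \<in> MS"
proof -
  have sub: "M \<subseteq> ex_edges" using m E by (auto simp: is_matching_def)
  have M: "M = (if {w1,f1} \<in> M then {{w1,f1}} else {}) \<union> (if {w1,f3} \<in> M then {{w1,f3}} else {})
     \<union> (if {w2,f1} \<in> M then {{w2,f1}} else {}) \<union> (if {w2,f2} \<in> M then {{w2,f2}} else {})
     \<union> (if {w3,f3} \<in> M then {{w3,f3}} else {})" using sub unfolding edges by auto
  have c1: "\<not> ({w1,f1} \<in> M \<and> {w1,f3} \<in> M)" using conf[OF m] by (auto simp: doubleton_eq_iff)
  have c2: "\<not> ({w1,f1} \<in> M \<and> {w2,f1} \<in> M)" using conf[OF m] by (auto simp: doubleton_eq_iff)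
  have c3: "\<not> ({w1,f3} \<in> M \<and> {w3,f3} \<in> M)" using conf[OF m] by (auto simp: doubleton_eq_iff)
  have c4: "\<not> ({w2,f1} \<in> M \<and> {w2,f2} \<in> M)" using conf[OF m] by (auto simp: doubleton_eq_iff)
  show ?thesis
    apply (subst M)
    using c1 c2 c3 c4 unfolding MS_def
    by (cases "{w1,f1} \<in> M"; cases "{w1,f3} \<in> M"; cases "{w2,f1} \<in> M"; cases "{w2,f2} \<in> M"; cases "{w3,f3} \<in> M"; simp add: insert_commute)
qed

lemma sum6: "(\<Sum>x\<in>{w1,w2,w3}\<union>{f1,f2,f3}. g x) = g w1 + g w2 + g w3 + g f1 + g f2 + g f3"
  by (simp add: ac_simps)
lemmas V = phi_def vote_def prefers_def matched_def partner_def doubleton_eq_iff IA_def IB_def sum6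

lemma np1: "\<not> (popular IA {} \<and> popular IB {})"
proof -
  have "phi IA {} {{w1,f1}} = -2" by (simp add: V)
  moreover have "is_matching IA {{w1,f1}}" by (simp add: is_matching_def IA_def edges doubleton_eq_iff)
  ultimately show ?thesis unfolding popular_def by force
qed

lemma np2: "\<not> (popular IA {{w1,f1}} \<and> popular IB {{w1,f1}})"
proof -
  have "phi IB {{w1,f1}} {{w1,f3}} = -1" by (simp add: V)
  moreover have "is_matching IB {{w1,f3}}" by (simp add: is_matching_def IB_def edges doubleton_eq_iff)
  ultimately show ?thesis unfolding popular_def by force
qed

lemma np3: "\<not> (popular IA {{w1,f3}} \<and> popular IB {{w1,f3}})"
proof -
  have "phi IA {{w1,f3}} {{w1,f1}} = -1" by (simp add: V)
  moreover have "is_matching IA {{w1,f1}}" by (simp add: is_matching_def IA_def edges doubleton_eq_iff)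
  ultimately show ?thesis unfolding popular_def by force
qed

lemma np4: "\<not> (popular IA {{w2,f1}} \<and> popular IB {{w2,f1}})"
proof -
  have "phi IA {{w2,f1}} {{w1,f1}, {w3,f3}} = -1" by (simp add: V)
  moreover have "is_matching IA {{w1,f1}, {w3,f3}}" by (simp add: is_matching_def IA_def edges doubleton_eq_iff)
  ultimately show ?thesis unfolding popular_def by force
qed

lemma np5: "\<not> (popular IA {{w2,f2}} \<and> popular IB {{w2,f2}})"
proof -
  have "phi IA {{w2,f2}} {{w2,f1}} = -1" by (simp add: V)
  moreover have "is_matching IA {{w2,f1}}" by (simp add: is_matching_def IA_def edges doubleton_eq_iff)
  ultimately show ?thesis unfolding popular_def by force
qed

lemma np6: "\<not> (popular IA {{w3,f3}} \<and> popular IB {{w3,f3}})"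
proof -
  have "phi IA {{w3,f3}} {{w1,f3}} = -1" by (simp add: V)
  moreover have "is_matching IA {{w1,f3}}" by (simp add: is_matching_def IA_def edges doubleton_eq_iff)
  ultimately show ?thesis unfolding popular_def by force
qed

lemma np7: "\<not> (popular IA {{w1,f1}, {w2,f2}} \<and> popular IB {{w1,f1}, {w2,f2}})"
proof -
  have "phi IA {{w1,f1}, {w2,f2}} {{w1,f3}, {w2,f1}} = -1" by (simp add: V)
  moreover have "is_matching IA {{w1,f3}, {w2,f1}}" by (simp add: is_matching_def IA_def edges doubleton_eq_iff)
  ultimately show ?thesis unfolding popular_def by force
qed

lemma np8: "\<not> (popular IA {{w1,f1}, {w3,f3}} \<and> popular IB {{w1,f1}, {w3,f3}})"
proof -
  have "phi IA {{w1,f1}, {w3,f3}} {{w1,f3}, {w2,f1}} = -1" by (simp add: V)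
  moreover have "is_matching IA {{w1,f3}, {w2,f1}}" by (simp add: is_matching_def IA_def edges doubleton_eq_iff)
  ultimately show ?thesis unfolding popular_def by force
qed

lemma np9: "\<not> (popular IA {{w1,f3}, {w2,f2}} \<and> popular IB {{w1,f3}, {w2,f2}})"
proof -
  have "phi IA {{w1,f3}, {w2,f2}} {{w1,f1}, {w2,f2}} = -1" by (simp add: V)
  moreover have "is_matching IA {{w1,f1}, {w2,f2}}" by (simp add: is_matching_def IA_def edges doubleton_eq_iff)
  ultimately show ?thesis unfolding popular_def by force
qed

lemma np10: "\<not> (popular IA {{w2,f1}, {w3,f3}} \<and> popular IB {{w2,f1}, {w3,f3}})"
proof -
  have "phi IA {{w2,f1}, {w3,f3}} {{w1,f3}, {w2,f1}} = -1" by (simp add: V)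
  moreover have "is_matching IA {{w1,f3}, {w2,f1}}" by (simp add: is_matching_def IA_def edges doubleton_eq_iff)
  ultimately show ?thesis unfolding popular_def by force
qed

lemma np11: "\<not> (popular IA {{w2,f2}, {w3,f3}} \<and> popular IB {{w2,f2}, {w3,f3}})"
proof -
  have "phi IA {{w2,f2}, {w3,f3}} {{w1,f3}, {w2,f1}} = -2" by (simp add: V)
  moreover have "is_matching IA {{w1,f3}, {w2,f1}}" by (simp add: is_matching_def IA_def edges doubleton_eq_iff)
  ultimately show ?thesis unfolding popular_def by force
qed

lemma np12: "\<not> (popular IA {{w1,f1}, {w2,f2}, {w3,f3}} \<and> popular IB {{w1,f1}, {w2,f2}, {w3,f3}})"
proof -
  have "phi IB {{w1,f1}, {w2,f2}, {w3,f3}} {{w1,f3}, {w2,f1}} = -2" by (simp add: V)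
  moreover have "is_matching IB {{w1,f3}, {w2,f1}}" by (simp add: is_matching_def IB_def edges doubleton_eq_iff)
  ultimately show ?thesis unfolding popular_def by force
qed

abbreviation "Ms \<equiv> {{w1,f3},{w2,f1}} :: agent set set"

lemma ms_match: "is_matching IA Ms" "is_matching IB Ms"
  by (simp_all add: is_matching_def IA_def IB_def edges doubleton_eq_iff)

lemma popA: "popular IA Ms"
proof -
  have "\<forall>M'\<in>MS. phi IA Ms M' \<ge> 0" unfolding MS_def by (simp add: V)
  thus ?thesis unfolding popular_def using ms_match match_dir[of IA] by (auto simp: IA_def)
qed

lemma popB: "popular IB Ms"
proof -
  have "\<forall>M'\<in>MS. phi IB Ms M' \<ge> 0" unfolding MS_def by (simp add: V)
  thus ?thesis unfolding popular_def using ms_match match_dir[of IB] by (auto simp: IB_def)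
qed

lemma uniq: assumes "popular IA M" "popular IB M" shows "M = Ms"
proof -
  have "M \<in> MS" using assms match_dir[of IA M] unfolding popular_def by (auto simp: IA_def)
  thus ?thesis using assms np1 np2 np3 np4 np5 np6 np7 np8 np9 np10 np11 np12
    unfolding MS_def by auto
qed

lemma inst: "matp_instance IA" "matp_instance IB"
  by (auto simp: matp_instance_def IA_def IB_def edges doubleton_eq_iff neighbors_def strict_linear_on_def)

theorem mainTheorem14:
  shows "matp_instance IA \<and> matp_instance IB
    \<and> Wk IA = Wk IB \<and> Fm IA = Fm IB \<and> Ed IA = Ed IB
    \<and> (\<forall>x. x \<noteq> w1 \<longrightarrow> pref IA x = pref IB x)
    \<and> pref IB w1 = (\<lambda>a b. pref IA w1 b a)
    \<and> {M. robust_popular IA IB M} = {{{w1, f3}, {w2, f1}}}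
    \<and> \<not> (\<exists>M. robust_dominant IA IB M)"
proof -
  have p: "\<forall>x. x \<noteq> w1 \<longrightarrow> pref IA x = pref IB x"
  proof (intro allI impI)
    fix x :: agent assume "x \<noteq> w1" thus "pref IA x = pref IB x"
      by (cases x) (auto simp: IA_def IB_def)
  qed
  have q: "pref IB w1 = (\<lambda>a b. pref IA w1 b a)" by (intro ext) (auto simp: IA_def IB_def)
  have r: "{M. robust_popular IA IB M} = {Ms}"
  proof (rule set_eqI, unfold mem_Collect_eq singleton_iff robust_popular_def)
    fix M show "(popular IA M \<and> popular IB M) = (M = Ms)" using popA popB uniq[of M] by blast
  qed
  have T: "is_matching IA {{w1,f1},{w2,f2},{w3,f3}}"
    by (simp add: is_matching_def IA_def edges doubleton_eq_iff)
  have ph: "phi IA Ms {{w1,f1},{w2,f2},{w3,f3}} = 0" by (simp add: V)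
  have c: "card {{w1,f1},{w2,f2},{w3,f3::agent}} = 3" "card Ms = 2"
    by (simp_all add: doubleton_eq_iff)
  have s: "\<not> (\<exists>M. robust_dominant IA IB M)"
  proof
    assume "\<exists>M. robust_dominant IA IB M"
    then obtain M where d: "dominant IA M" "dominant IB M" unfolding robust_dominant_def by blast
    hence pa: "popular IA M" "popular IB M" unfolding dominant_def by blast+
    have "M = Ms" by (rule uniq[OF pa])
    with d(1) have "dominant IA Ms" by simp
    hence "phi IA Ms {{w1,f1},{w2,f2},{w3,f3}} > 0" using T c unfolding dominant_def by simp
    thus False using ph by simp
  qed
  have e: "Wk IA = Wk IB" "Fm IA = Fm IB" "Ed IA = Ed IB" by (simp_all add: IA_def IB_def)
  have i1: "matp_instance IA" and i2: "matp_instance IB" by (rule inst(1), rule inst(2))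
  show ?thesis
    by (intro conjI i1 i2 e(1) e(2) e(3) p q r s)
qed

end
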